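(* Let $\mathcal D$ consist of $n$ i.i.d. triples $(x,a,y)$ with $x\sim d_0$, $a$ uniform on $\mathcal A$, and $y$ the environment's feedback. Let $\iota\ge\log\frac{2|\Pi||\Psi|}{\delta}$ and $\varepsilon_{\mathcal D}=\sqrt{\iota/(2n)}$. Then with probability at least $1-\delta$, for every $\pi\in\Pi$ with $V(\pi)\le V(\pi_u)$ and every $\psi\in\Psi$, $$\widehat V_{\mathcal D}(\pi,\psi)-\widehat V_{\mathcal D}(\pi_u,\psi)\le V(\pi_u)+K\varepsilon_{\mathcal D},$$ where $\widehat V_{\mathcal D}(\pi,\psi)=\frac1n\sum_{(x,a,y)\in\mathcal D}K\psi(y)\pi(a|x)$ and $\widehat V_{\mathcal D}(\pi_u,\psi)=\frac1n\sum_{(x,a,y)\in\mathcal D}\psi(y)$. (Assumption 1 is assumed.)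
   Context: IGL setting: contexts $x\sim d_0$, finite action set $\mathcal A$ with $|\mathcal A|=K$, latent reward $r\in\{0,1\}$ and feedback $y\in\mathcal Y$ drawn given $(x,a)$; $R(x,a)=\mathbb E[r|x,a]$, $V(\pi)=\mathbb E_{x\sim d_0,a\sim\pi(\cdot|x)}[R(x,a)]$, $V(\pi,\psi)=\mathbb E_{x\sim d_0,a\sim\pi(\cdot|x)}[\psi(y)]$ for decoders $\psi:\mathcal Y\to[0,1]$. $\Pi$, $\Psi$ finite classes of policies and decoders. Assumption 1: there are distributions $Q_0,Q_1$ on $\mathcal Y$ with $y\mid(x,a,r)\sim Q_r$. $\pi_u$ is the uniform policy $\pi_u(a|x)=1/K$. *)

theory Defs
  imports "HOL-Probability.Probability"
begin

text \<open>Contexts of type 'x with distribution d0 (a probability measure),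
  finite action type 'a (K = CARD('a)), latent binary reward r with
  P(r = 1 | x, a) = R x a, feedback of type 'y with y | (x,a,r) ~ Q_r
  (Assumption 1). A policy is pi :: 'x => 'a => real, pi x a = pi(a|x).\<close>

definition sample_dist ::
  "'x measure \<Rightarrow> ('x \<Rightarrow> 'a::finite \<Rightarrow> real) \<Rightarrow> 'y measure \<Rightarrow> 'y measure
     \<Rightarrow> ('x \<times> 'a \<times> 'y) measure" where
  "sample_dist d0 R Q0 Q1 =
     d0 \<bind> (\<lambda>x. measure_pmf (pmf_of_set (UNIV :: 'a set)) \<bind> (\<lambda>a.
       measure_pmf (bernoulli_pmf (R x a)) \<bind> (\<lambda>r.
         distr (if r then Q1 else Q0) (d0 \<Otimes>\<^sub>M count_space UNIV \<Otimes>\<^sub>M Q0)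
               (\<lambda>y. (x, a, y)))))"

definition data_dist ::
  "nat \<Rightarrow> 'x measure \<Rightarrow> ('x \<Rightarrow> 'a::finite \<Rightarrow> real) \<Rightarrow> 'y measure \<Rightarrow> 'y measure
     \<Rightarrow> (nat \<Rightarrow> 'x \<times> 'a \<times> 'y) measure" where
  "data_dist n d0 R Q0 Q1 = PiM {..<n} (\<lambda>_. sample_dist d0 R Q0 Q1)"

definition Vpol :: "'x measure \<Rightarrow> ('x \<Rightarrow> 'a::finite \<Rightarrow> real) \<Rightarrow> ('x \<Rightarrow> 'a \<Rightarrow> real) \<Rightarrow> real" where
  "Vpol d0 R \<pi> = (\<integral>x. (\<Sum>a\<in>UNIV. \<pi> x a * R x a) \<partial>d0)"

definition unif_pol :: "'x \<Rightarrow> 'a::finite \<Rightarrow> real" where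
  "unif_pol x a = 1 / real CARD('a)"

definition Vhat :: "nat \<Rightarrow> (nat \<Rightarrow> 'x \<times> 'a::finite \<times> 'y) \<Rightarrow> ('x \<Rightarrow> 'a \<Rightarrow> real) \<Rightarrow> ('y \<Rightarrow> real) \<Rightarrow> real" where
  "Vhat n D \<pi> \<psi> = (1 / real n) * (\<Sum>i<n. (case D i of (x, a, y) \<Rightarrow> real CARD('a) * \<psi> y * \<pi> x a))"

definition Vhat_u :: "nat \<Rightarrow> (nat \<Rightarrow> 'x \<times> 'a \<times> 'y) \<Rightarrow> ('y \<Rightarrow> real) \<Rightarrow> real" where
  "Vhat_u n D \<psi> = (1 / real n) * (\<Sum>i<n. (case D i of (x, a, y) \<Rightarrow> \<psi> y))"

end

theory Submission
  imports Defs
begin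


lemma prob_space_bind_gen:
  assumes M: "prob_space M" and f: "f \<in> measurable M (subprob_algebra N)"
    and p: "\<And>x. x \<in> space M \<Longrightarrow> prob_space (f x)"
  shows "prob_space (M \<bind> f)"
proof -
  interpret M: prob_space M by fact
  have ne: "space M \<noteq> {}" by (rule M.not_empty)
  have sets: "sets (M \<bind> f) = sets N"
    using f ne by (intro sets_bind) (auto dest: subprob_measurableD)
  have sp: "space (M \<bind> f) = space N" using sets_eq_imp_space_eq[OF sets] .
  have "emeasure (M \<bind> f) (space N) = (\<integral>\<^sup>+x. emeasure (f x) (space N) \<partial>M)"
    by (rule emeasure_bind[OF ne f]) simp
  also have "\<dots> = (\<integral>\<^sup>+x. 1 \<partial>M)"
  proof (rule nn_integral_cong)
    fix x assume x: "x \<in> space M"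
    have "sets (f x) = sets N" using f x by (auto dest: subprob_measurableD)
    then have "space (f x) = space N" by (rule sets_eq_imp_space_eq)
    then show "emeasure (f x) (space N) = 1" using prob_space.emeasure_space_1[OF p[OF x]] by simp
  qed
  also have "\<dots> = 1" using M.emeasure_space_1 by simp
  finally show ?thesis by (intro prob_spaceI) (simp add: sp)
qed

lemma inner_gen:
  assumes Q: "prob_space Q" and psi: "\<psi> \<in> borel_measurable Q"
    and r: "\<And>y. 0 \<le> \<psi> y \<and> \<psi> y \<le> 1" and k: "0 \<le> (k::real)"
  shows "(\<integral>\<^sup>+y. ennreal ((k-1)*\<psi> y + 1) \<partial>Q) = ennreal ((k-1)*(\<integral>y. \<psi> y \<partial>Q) + 1)"
    and "0 \<le> (k-1)*(\<integral>y. \<psi> y \<partial>Q) + 1"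
proof -
  interpret Q: prob_space Q by fact
  have nn: "0 \<le> (k-1)*t + 1" if "0 \<le> t" "t \<le> 1" for t
  proof (cases "k \<ge> 1")
    case True then show ?thesis using that by simp
  next
    case False
    then have "(k-1)*t \<ge> (k-1)*1" using that by (intro mult_left_mono_neg) auto
    then show ?thesis using k by simp
  qed
  have ip: "integrable Q \<psi>"
    by (rule Q.integrable_const_bound[where B=1]) (use r psi in auto)
  have i1: "0 \<le> (\<integral>y. \<psi> y \<partial>Q)" using r by (simp add: integral_nonneg_AE)
  have i2: "(\<integral>y. \<psi> y \<partial>Q) \<le> 1"
  proof -
    have "(\<integral>y. \<psi> y \<partial>Q) \<le> (\<integral>y. 1 \<partial>Q)" using r ip by (intro integral_mono) auto
    then show ?thesis using Q.prob_space by simp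
  qed
  have "(\<integral>\<^sup>+y. ennreal ((k-1)*\<psi> y + 1) \<partial>Q) = ennreal (\<integral>y. (k-1)*\<psi> y + 1 \<partial>Q)"
    by (rule nn_integral_eq_integral) (use ip r nn in auto)
  also have "(\<integral>y. (k-1)*\<psi> y + 1 \<partial>Q) = (k-1)*(\<integral>y. \<psi> y \<partial>Q) + 1"
    using ip Q.prob_space by simp
  finally show "(\<integral>\<^sup>+y. ennreal ((k-1)*\<psi> y + 1) \<partial>Q) = ennreal ((k-1)*(\<integral>y. \<psi> y \<partial>Q) + 1)" .
  show "0 \<le> (k-1)*(\<integral>y. \<psi> y \<partial>Q) + 1" using nn i1 i2 by simp
qed

definition Zf :: "('x \<Rightarrow> 'a::finite \<Rightarrow> real) \<Rightarrow> ('y \<Rightarrow> real) \<Rightarrow> 'x \<times> 'a \<times> 'y \<Rightarrow> real" where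
  "Zf \<pi> \<psi> z = (case z of (x,a,y) \<Rightarrow> real CARD('a) * \<psi> y * \<pi> x a - \<psi> y)"

lemma nn_aff: "0 \<le> (k::real) \<Longrightarrow> 0 \<le> t \<Longrightarrow> t \<le> 1 \<Longrightarrow> 0 \<le> (k-1)*t + 1"
proof (cases "k \<ge> 1")
  case False
  assume "0 \<le> k" "0 \<le> t" "t \<le> 1"
  then have "(k-1)*t \<ge> (k-1)*1" using False by (intro mult_left_mono_neg) auto
  then show ?thesis using \<open>0 \<le> k\<close> by simp
qed simp

lemma indep_components:
  assumes I: "I \<noteq> {}" and N: "prob_space N"
  shows "prob_space.indep_vars (PiM I (\<lambda>_. N)) (\<lambda>_. N) (\<lambda>i \<omega>. \<omega> i) I"
proof -
  interpret p: prob_space "PiM I (\<lambda>_. N)" by (intro prob_space_PiM) (use N in auto)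
  show ?thesis
  proof (rule iffD2[OF p.indep_vars_iff_distr_eq_PiM'[OF I]])
    show "\<And>i. i \<in> I \<Longrightarrow> (\<lambda>\<omega>. \<omega> i) \<in> measurable (PiM I (\<lambda>_. N)) N" by simp
    have "distr (PiM I (\<lambda>_. N)) (PiM I (\<lambda>_. N)) (\<lambda>x. \<lambda>i\<in>I. x i) = distr (PiM I (\<lambda>_. N)) (PiM I (\<lambda>_. N)) (\<lambda>x. x)"
      by (rule distr_cong) (auto simp: space_PiM PiE_restrict)
    also have "\<dots> = PiM I (\<lambda>_. N)" by simp
    also have "\<dots> = PiM I (\<lambda>i. distr (PiM I (\<lambda>_. N)) N (\<lambda>\<omega>. \<omega> i))"
      by (rule PiM_cong, simp, rule distr_PiM_component[symmetric], rule N, assumption)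
    finally show "distr (PiM I (\<lambda>_. N)) (PiM I (\<lambda>_. N)) (\<lambda>x. \<lambda>i\<in>I. x i) = PiM I (\<lambda>i. distr (PiM I (\<lambda>_. N)) N (\<lambda>\<omega>. \<omega> i))" .
  qed
qed

lemma Vhat_diff: "Vhat n D \<pi> \<psi> - Vhat_u n D \<psi> = (\<Sum>i<n. Zf \<pi> \<psi> (D i)) / real n"
proof -
  have e: "\<And>i. Zf \<pi> \<psi> (D i) = (case D i of (x,a,y) \<Rightarrow> real CARD('b) * \<psi> y * \<pi> x a) - (case D i of (x,a,y) \<Rightarrow> \<psi> y)"
    unfolding Zf_def by (simp split: prod.splits)
  have s: "(\<Sum>i<n. Zf \<pi> \<psi> (D i)) = (\<Sum>i<n. (case D i of (x,a,y) \<Rightarrow> real CARD('b) * \<psi> y * \<pi> x a)) - (\<Sum>i<n. (case D i of (x,a,y) \<Rightarrow> \<psi> y))"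
    by (simp only: e sum_subtractf)
  have g: "\<And>u v::real. 1 / real n * u - 1 / real n * v = (u - v) / real n" by (simp add: diff_divide_distrib)
  show ?thesis unfolding Vhat_def Vhat_u_def s by (rule g)
qed

lemma int_01:
  fixes \<psi> :: "'a \<Rightarrow> real"
  assumes Q: "prob_space Q" and psi: "\<psi> \<in> borel_measurable Q"
    and r: "\<And>y. 0 \<le> \<psi> y \<and> \<psi> y \<le> 1"
  shows "0 \<le> (\<integral>y. \<psi> y \<partial>Q)" "(\<integral>y. \<psi> y \<partial>Q) \<le> 1"
proof -
  interpret Q: prob_space Q by fact
  have ip: "integrable Q \<psi>"
    by (rule Q.integrable_const_bound[where B=1]) (use r psi in auto)
  show "0 \<le> (\<integral>y. \<psi> y \<partial>Q)" using r by (simp add: integral_nonneg_AE)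
  have "(\<integral>y. \<psi> y \<partial>Q) \<le> (\<integral>y. 1 \<partial>Q)" using r ip by (intro integral_mono) auto
  then show "(\<integral>y. \<psi> y \<partial>Q) \<le> 1" using Q.prob_space by simp
qed

locale igl =
  fixes d0 :: "'x measure" and Q0 Q1 :: "'y measure" and R :: "'x \<Rightarrow> 'a::finite \<Rightarrow> real"
  assumes d0: "prob_space d0" and Q0: "prob_space Q0" and Q1: "prob_space Q1"
    and Qsets: "sets Q1 = sets Q0"
    and R_meas: "\<And>a. (\<lambda>x. R x a) \<in> borel_measurable d0"
    and R_range: "\<And>x a. 0 \<le> R x a \<and> R x a \<le> 1"
begin

abbreviation "P \<equiv> d0 \<Otimes>\<^sub>M count_space (UNIV::'a set) \<Otimes>\<^sub>M Q0"
definition "Qr r = (if r then Q1 else Q0)"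
definition "h x a r = distr (Qr r) P (\<lambda>y. (x,a,y))"
definition "K1 x a = measure_pmf (bernoulli_pmf (R x a)) \<bind> h x a"
definition "Kx x = measure_pmf (pmf_of_set (UNIV::'a set)) \<bind> K1 x"

lemma sample_eq: "sample_dist d0 R Q0 Q1 = d0 \<bind> Kx"
  unfolding sample_dist_def Kx_def K1_def h_def Qr_def ..

lemma Qr_prob: "prob_space (Qr r)" using Q0 Q1 by (simp add: Qr_def)
lemma Qr_sets: "sets (Qr r) = sets Q0" using Qsets by (simp add: Qr_def)

lemma map_meas: "x \<in> space d0 \<Longrightarrow> (\<lambda>y. (x,a,y)) \<in> measurable (Qr r) P"
  apply (rule measurable_Pair, simp, rule measurable_Pair, simp)
  apply (rule measurable_ident_sets[OF Qr_sets])
  done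

lemma h_prob: "x \<in> space d0 \<Longrightarrow> prob_space (h x a r)"
  unfolding h_def by (rule prob_space.prob_space_distr[OF Qr_prob map_meas])

lemma h_sets: "sets (h x a r) = sets P"
  unfolding h_def by simp

lemma h_sub: "x \<in> space d0 \<Longrightarrow> h x a \<in> measurable (measure_pmf p) (subprob_algebra P)"
  using h_prob by (auto simp: space_subprob_algebra h_sets prob_space_imp_subprob_space)

lemma nn_h: "x \<in> space d0 \<Longrightarrow> g \<in> borel_measurable P \<Longrightarrow>
   (\<integral>\<^sup>+z. g z \<partial>h x a r) = (\<integral>\<^sup>+y. g (x,a,y) \<partial>Qr r)"
  unfolding h_def apply (rule nn_integral_distr[OF map_meas], assumption)
  apply (subst measurable_cong_sets[OF sets_distr refl]) apply assumption done

lemma K1_prob: "x \<in> space d0 \<Longrightarrow> prob_space (K1 x a)"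
  unfolding K1_def by (rule prob_space_bind_gen[OF prob_space_measure_pmf h_sub h_prob])

lemma K1_sets: "sets (K1 x a) = sets P"
  unfolding K1_def by (rule sets_bind) (auto simp: h_sets)

lemma nn_K1: assumes x: "x \<in> space d0" and g: "g \<in> borel_measurable P"
  shows "(\<integral>\<^sup>+z. g z \<partial>K1 x a) = ennreal (R x a) * (\<integral>\<^sup>+y. g (x,a,y) \<partial>Q1)
          + ennreal (1 - R x a) * (\<integral>\<^sup>+y. g (x,a,y) \<partial>Q0)"
proof -
  have "(\<integral>\<^sup>+z. g z \<partial>K1 x a) = (\<integral>\<^sup>+r. (\<integral>\<^sup>+z. g z \<partial>h x a r) \<partial>measure_pmf (bernoulli_pmf (R x a)))"
    unfolding K1_def by (rule nn_integral_bind[OF g h_sub[OF x]])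
  also have "\<dots> = (\<Sum>r\<in>UNIV. (\<integral>\<^sup>+z. g z \<partial>h x a r) * pmf (bernoulli_pmf (R x a)) r)"
    by (rule nn_integral_measure_pmf_support) auto
  also have "\<dots> = ennreal (R x a) * (\<integral>\<^sup>+y. g (x,a,y) \<partial>Q1)
          + ennreal (1 - R x a) * (\<integral>\<^sup>+y. g (x,a,y) \<partial>Q0)"
    using R_range[of x a] by (simp add: UNIV_bool nn_h[OF x g] Qr_def mult.commute)
  finally show ?thesis .
qed

lemma K1_sub: "x \<in> space d0 \<Longrightarrow> K1 x \<in> measurable (measure_pmf p) (subprob_algebra P)"
  using K1_prob by (auto simp: space_subprob_algebra K1_sets prob_space_imp_subprob_space)

lemma Kx_prob: "x \<in> space d0 \<Longrightarrow> prob_space (Kx x)"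
  unfolding Kx_def by (rule prob_space_bind_gen[OF prob_space_measure_pmf K1_sub K1_prob])

lemma Kx_sets: "sets (Kx x) = sets P"
  unfolding Kx_def by (rule sets_bind) (auto simp: K1_sets)

definition "F g x = (\<Sum>a\<in>UNIV. ennreal (1 / real CARD('a)) *
   (ennreal (R x a) * (\<integral>\<^sup>+y. g (x,a,y) \<partial>Q1) + ennreal (1 - R x a) * (\<integral>\<^sup>+y. g (x,a,y) \<partial>Q0)))"

lemma nn_Kx: assumes x: "x \<in> space d0" and g: "g \<in> borel_measurable P"
  shows "(\<integral>\<^sup>+z. g z \<partial>Kx x) = F g x"
proof -
  have "(\<integral>\<^sup>+z. g z \<partial>Kx x) = (\<integral>\<^sup>+a. (\<integral>\<^sup>+z. g z \<partial>K1 x a) \<partial>measure_pmf (pmf_of_set (UNIV::'a set)))"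
    unfolding Kx_def by (rule nn_integral_bind[OF g K1_sub[OF x]])
  also have "\<dots> = (\<Sum>a\<in>UNIV. (\<integral>\<^sup>+z. g z \<partial>K1 x a) * pmf (pmf_of_set (UNIV::'a set)) a)"
    by (rule nn_integral_measure_pmf_support) auto
  also have "\<dots> = F g x"
    unfolding F_def by (simp add: nn_K1[OF x g] mult.commute)
  finally show ?thesis .
qed

lemma sec_meas: assumes g: "g \<in> borel_measurable P"
  shows "(\<lambda>x. \<integral>\<^sup>+y. g (x,a,y) \<partial>Q1) \<in> borel_measurable d0"
    "(\<lambda>x. \<integral>\<^sup>+y. g (x,a,y) \<partial>Q0) \<in> borel_measurable d0"
proof -
  interpret q1: prob_space Q1 by (rule Q1)
  interpret q0: prob_space Q0 by (rule Q0)
  have m1: "(\<lambda>z. (fst z,a,snd z)) \<in> measurable (d0 \<Otimes>\<^sub>M Q1) P"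
    apply (rule measurable_Pair, simp, rule measurable_Pair, simp)
    apply (rule measurable_compose[OF measurable_snd], rule measurable_ident_sets[OF Qsets])
    done
  have m0: "(\<lambda>z. (fst z,a,snd z)) \<in> measurable (d0 \<Otimes>\<^sub>M Q0) P"
    by measurable
  have "case_prod (\<lambda>x y. g (x,a,y)) \<in> borel_measurable (d0 \<Otimes>\<^sub>M Q1)"
    using measurable_compose[OF m1 g] by (simp add: case_prod_beta')
  then show "(\<lambda>x. \<integral>\<^sup>+y. g (x,a,y) \<partial>Q1) \<in> borel_measurable d0"
    by (rule q1.borel_measurable_nn_integral)
  have "case_prod (\<lambda>x y. g (x,a,y)) \<in> borel_measurable (d0 \<Otimes>\<^sub>M Q0)"
    using measurable_compose[OF m0 g] by (simp add: case_prod_beta')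
  then show "(\<lambda>x. \<integral>\<^sup>+y. g (x,a,y) \<partial>Q0) \<in> borel_measurable d0"
    by (rule q0.borel_measurable_nn_integral)
qed

lemma F_meas: assumes g: "g \<in> borel_measurable P" shows "F g \<in> borel_measurable d0"
proof -
  have r1: "(\<lambda>x. ennreal (R x a)) \<in> borel_measurable d0" for a using R_meas[of a] by measurable
  have r2: "(\<lambda>x. ennreal (1 - R x a)) \<in> borel_measurable d0" for a using R_meas[of a] by measurable
  show ?thesis unfolding F_def
    by (intro borel_measurable_sum borel_measurable_times_ennreal borel_measurable_add
        borel_measurable_const r1 r2 sec_meas[OF g])
qed

lemma Kx_meas: "Kx \<in> measurable d0 (subprob_algebra P)"
proof (rule measurable_subprob_algebra)
  fix x assume "x \<in> space d0" then show "subprob_space (Kx x)"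
    using Kx_prob prob_space_imp_subprob_space by blast
next
  fix x show "sets (Kx x) = sets P" by (rule Kx_sets)
next
  fix A assume A: "A \<in> sets P"
  have ig: "indicator A \<in> borel_measurable P" using A by simp
  have "(\<lambda>x. emeasure (Kx x) A) \<in> borel_measurable d0 \<longleftrightarrow> F (indicator A) \<in> borel_measurable d0"
    apply (rule measurable_cong)
    apply (subst nn_Kx[OF _ ig, symmetric], assumption)
    using A Kx_sets by simp
  then show "(\<lambda>x. emeasure (Kx x) A) \<in> borel_measurable d0" using F_meas[OF ig] by simp
qed

abbreviation "S \<equiv> d0 \<bind> Kx"

lemma S_prob: "prob_space S"
  by (rule prob_space_bind_gen[OF d0 Kx_meas Kx_prob])

lemma S_sets: "sets S = sets P"
  by (rule sets_bind[OF Kx_sets prob_space.not_empty[OF d0]])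

lemma nn_S: "g \<in> borel_measurable P \<Longrightarrow> (\<integral>\<^sup>+z. g z \<partial>S) = (\<integral>\<^sup>+x. F g x \<partial>d0)"
  by (simp add: nn_integral_bind[OF _ Kx_meas] nn_Kx cong: nn_integral_cong)

definition "W \<pi> \<psi> z = (case z of (x,a,y) \<Rightarrow> (real CARD('a) * \<pi> x a - 1) * \<psi> y + 1)"

definition "fW \<pi> \<psi> x = (\<Sum>a\<in>UNIV. (1 / real CARD('a)) *
   (R x a * ((real CARD('a) * \<pi> x a - 1) * (\<integral>y. \<psi> y \<partial>Q1) + 1)
    + (1 - R x a) * ((real CARD('a) * \<pi> x a - 1) * (\<integral>y. \<psi> y \<partial>Q0) + 1)))"

lemma W_meas:
  assumes pm: "\<And>a. (\<lambda>x. \<pi> x a) \<in> borel_measurable d0" and psm: "\<psi> \<in> borel_measurable Q0"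
  shows "W \<pi> \<psi> \<in> borel_measurable P"
proof -
  have "(\<lambda>z. \<pi> (fst z) (fst (snd z))) \<in> borel_measurable P"
    by (rule measurable_compose_countable'[where I=UNIV]) (use pm in auto)
  moreover have "(\<lambda>z. \<psi> (snd (snd z))) \<in> borel_measurable P" using psm by measurable
  ultimately have "(\<lambda>z. (real CARD('a) * \<pi> (fst z) (fst (snd z)) - 1) * \<psi> (snd (snd z)) + 1) \<in> borel_measurable P"
    by measurable
  moreover have "W \<pi> \<psi> = (\<lambda>z. (real CARD('a) * \<pi> (fst z) (fst (snd z)) - 1) * \<psi> (snd (snd z)) + 1)"
    by (auto simp: W_def fun_eq_iff split: prod.splits)
  ultimately show ?thesis by simp
qed

lemma F_W:
  assumes pn: "\<And>x a. 0 \<le> \<pi> x a" and psm: "\<psi> \<in> borel_measurable Q0"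
    and psr: "\<And>y. 0 \<le> \<psi> y \<and> \<psi> y \<le> 1" and x: "x \<in> space d0"
  shows "F (\<lambda>z. ennreal (W \<pi> \<psi> z)) x = ennreal (fW \<pi> \<psi> x)"
proof -
  have psm1: "\<psi> \<in> borel_measurable Q1" using psm by (simp add: measurable_cong_sets[OF Qsets refl])
  have k: "0 \<le> real CARD('a) * \<pi> x a" for a using pn by simp
  note i1 = inner_gen[OF Q1 psm1 psr k] and i0 = inner_gen[OF Q0 psm psr k]
  have "F (\<lambda>z. ennreal (W \<pi> \<psi> z)) x = (\<Sum>a\<in>UNIV. ennreal (1 / real CARD('a)) *
   (ennreal (R x a) * ennreal ((real CARD('a) * \<pi> x a - 1) * (\<integral>y. \<psi> y \<partial>Q1) + 1)
    + ennreal (1 - R x a) * ennreal ((real CARD('a) * \<pi> x a - 1) * (\<integral>y. \<psi> y \<partial>Q0) + 1)))"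
    unfolding F_def W_def by (simp add: i1(1) i0(1))
  also have "\<dots> = (\<Sum>a\<in>UNIV. ennreal ((1 / real CARD('a)) *
   (R x a * ((real CARD('a) * \<pi> x a - 1) * (\<integral>y. \<psi> y \<partial>Q1) + 1)
    + (1 - R x a) * ((real CARD('a) * \<pi> x a - 1) * (\<integral>y. \<psi> y \<partial>Q0) + 1))))"
  proof (intro sum.cong refl)
    fix a
    have a1: "0 \<le> R x a" "0 \<le> 1 - R x a" using R_range[of x a] by auto
    have a2: "0 \<le> R x a * ((real CARD('a) * \<pi> x a - 1) * (\<integral>y. \<psi> y \<partial>Q1) + 1)"
      using a1 i1(2) by simp
    have a3: "0 \<le> (1 - R x a) * ((real CARD('a) * \<pi> x a - 1) * (\<integral>y. \<psi> y \<partial>Q0) + 1)"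
      using a1 i0(2) by simp
    show "ennreal (1 / real CARD('a)) *
   (ennreal (R x a) * ennreal ((real CARD('a) * \<pi> x a - 1) * (\<integral>y. \<psi> y \<partial>Q1) + 1)
    + ennreal (1 - R x a) * ennreal ((real CARD('a) * \<pi> x a - 1) * (\<integral>y. \<psi> y \<partial>Q0) + 1)) =
      ennreal ((1 / real CARD('a)) *
   (R x a * ((real CARD('a) * \<pi> x a - 1) * (\<integral>y. \<psi> y \<partial>Q1) + 1)
    + (1 - R x a) * ((real CARD('a) * \<pi> x a - 1) * (\<integral>y. \<psi> y \<partial>Q0) + 1)))"
      apply (subst ennreal_mult[of "1 / real CARD('a)"], simp, simp add: a2 a3)
      apply (subst ennreal_plus, rule a2, rule a3)
      apply (subst ennreal_mult, rule a1, rule i1(2))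
      apply (subst ennreal_mult, rule a1, rule i0(2))
      ..
  qed
  also have "\<dots> = ennreal (fW \<pi> \<psi> x)"
    unfolding fW_def using R_range[of x] i1(2) i0(2)
    by (intro sum_ennreal) (auto intro!: mult_nonneg_nonneg add_nonneg_nonneg)
  finally show ?thesis .
qed

lemma pol_int:
  assumes pm: "\<And>a. (\<lambda>x. \<pi> x a) \<in> borel_measurable d0" and pn: "\<And>x a. 0 \<le> \<pi> x a"
    and ps: "\<And>x. (\<Sum>a\<in>UNIV. \<pi> x a) = 1"
  shows "integrable d0 (\<lambda>x. \<Sum>a\<in>UNIV. \<pi> x a * R x a)"
proof -
  interpret d: prob_space d0 by (rule d0)
  show ?thesis
  proof (rule d.integrable_const_bound[where B=1])
    show "AE x in d0. norm (\<Sum>a\<in>UNIV. \<pi> x a * R x a) \<le> 1"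
    proof (intro AE_I2)
      fix x
      have "0 \<le> (\<Sum>a\<in>UNIV. \<pi> x a * R x a)" using pn R_range by (intro sum_nonneg) auto
      moreover have "(\<Sum>a\<in>UNIV. \<pi> x a * R x a) \<le> (\<Sum>a\<in>UNIV. \<pi> x a)"
        using pn R_range by (intro sum_mono) (auto intro: mult_left_le)
      ultimately show "norm (\<Sum>a\<in>UNIV. \<pi> x a * R x a) \<le> 1" using ps[of x] by simp
    qed
    show "(\<lambda>x. \<Sum>a\<in>UNIV. \<pi> x a * R x a) \<in> borel_measurable d0"
      using pm R_meas by (intro borel_measurable_sum borel_measurable_times) auto
  qed
qed

context
  fixes \<pi> :: "'x \<Rightarrow> 'a \<Rightarrow> real" and \<psi> :: "'y \<Rightarrow> real"
  assumes pm: "\<And>a. (\<lambda>x. \<pi> x a) \<in> borel_measurable d0" and pn: "\<And>x a. 0 \<le> \<pi> x a"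
    and ps: "\<And>x. (\<Sum>a\<in>UNIV. \<pi> x a) = 1"
    and psm: "\<psi> \<in> borel_measurable Q0" and psr: "\<And>y. 0 \<le> \<psi> y \<and> \<psi> y \<le> 1"
begin

lemma pi_le1: "\<pi> x a \<le> 1"
proof -
  have "\<pi> x a \<le> (\<Sum>b\<in>UNIV. \<pi> x b)" by (rule member_le_sum) (use pn in auto)
  then show ?thesis using ps by simp
qed

lemma W_bounds: "0 \<le> W \<pi> \<psi> z" "W \<pi> \<psi> z \<le> real CARD('a)"
proof -
  obtain x a y where z: "z = (x,a,y)" by (cases z) auto
  have k: "0 \<le> real CARD('a) * \<pi> x a" using pn by simp
  show "0 \<le> W \<pi> \<psi> z" unfolding z W_def using nn_aff[OF k] psr by simp
  have "real CARD('a) * \<pi> x a \<le> real CARD('a)" using pi_le1 by simp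
  moreover have c1: "1 \<le> real CARD('a)" by simp
  ultimately have "(real CARD('a) * \<pi> x a - 1) * \<psi> y \<le> (real CARD('a) - 1) * \<psi> y"
    using psr by (intro mult_right_mono) auto
  also have "\<dots> \<le> (real CARD('a) - 1) * 1" using psr c1 by (intro mult_left_mono) auto
  finally show "W \<pi> \<psi> z \<le> real CARD('a)" unfolding z W_def by simp
qed

lemma Z_eq: "Zf \<pi> \<psi> z = W \<pi> \<psi> z - 1"
  by (cases z) (simp add: Zf_def W_def algebra_simps)

lemma fW_eq: "fW \<pi> \<psi> x = ((\<integral>y. \<psi> y \<partial>Q1) - (\<integral>y. \<psi> y \<partial>Q0)) *
    ((\<Sum>a\<in>UNIV. \<pi> x a * R x a) - (\<Sum>a\<in>UNIV. unif_pol x a * R x a)) + 1"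
proof -
  define q1 where "q1 = (\<integral>y. \<psi> y \<partial>Q1)"
  define q0 where "q0 = (\<integral>y. \<psi> y \<partial>Q0)"
  define k where "k = real CARD('a)"
  have k0: "k \<noteq> 0" by (simp add: k_def)
  have "fW \<pi> \<psi> x = (\<Sum>a\<in>UNIV. (q1 - q0) * (\<pi> x a * R x a - unif_pol x a * R x a)
        + (q0 * \<pi> x a - q0 * (1/k) + 1/k))"
    unfolding fW_def q1_def[symmetric] q0_def[symmetric] k_def[symmetric]
    by (intro sum.cong refl) (simp add: unif_pol_def k_def[symmetric] field_simps k0)
  also have "\<dots> = (q1 - q0) * ((\<Sum>a\<in>(UNIV::'a set). \<pi> x a * R x a) - (\<Sum>a\<in>(UNIV::'a set). unif_pol x a * R x a))
       + (q0 * (\<Sum>a\<in>(UNIV::'a set). \<pi> x a) - q0 * (\<Sum>a\<in>(UNIV::'a set). 1/k) + (\<Sum>a\<in>(UNIV::'a set). 1/k))"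
    by (simp add: sum.distrib sum_subtractf sum_distrib_left right_diff_distrib)
  also have "(\<Sum>a\<in>(UNIV::'a set). 1/k) = 1" by (simp add: k_def)
  finally show ?thesis using ps[of x] by (simp add: q1_def q0_def)
qed

lemma expect_Z: "(\<integral>z. Zf \<pi> \<psi> z \<partial>S) = ((\<integral>y. \<psi> y \<partial>Q1) - (\<integral>y. \<psi> y \<partial>Q0)) *
    (Vpol d0 R \<pi> - Vpol d0 R unif_pol)"
proof -
  interpret s: prob_space S by (rule S_prob)
  interpret d: prob_space d0 by (rule d0)
  have Wm: "W \<pi> \<psi> \<in> borel_measurable S"
    using W_meas[OF pm psm] by (simp add: measurable_cong_sets[OF S_sets refl])
  have Wi: "integrable S (W \<pi> \<psi>)"
    by (rule s.integrable_const_bound[where B="real CARD('a)"]) (use W_bounds Wm in auto)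
  have upm: "\<And>a. (\<lambda>x. unif_pol x a) \<in> borel_measurable d0" by (simp add: unif_pol_def)
  have upn: "\<And>x a. 0 \<le> unif_pol x a" by (simp add: unif_pol_def)
  have ups: "\<And>x. (\<Sum>a\<in>UNIV. unif_pol x a) = (1::real)" by (simp add: unif_pol_def)
  have iA: "integrable d0 (\<lambda>x. \<Sum>a\<in>UNIV. \<pi> x a * R x a)" by (rule pol_int[OF pm pn ps])
  have iB: "integrable d0 (\<lambda>x. \<Sum>a\<in>UNIV. unif_pol x a * R x a)" by (rule pol_int[OF upm upn ups])
  define c where "c = (\<integral>y. \<psi> y \<partial>Q1) - (\<integral>y. \<psi> y \<partial>Q0)"
  have ifW: "integrable d0 (fW \<pi> \<psi>)"
    unfolding fW_eq c_def[symmetric] using iA iB by auto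
  have ifWv: "(\<integral>x. fW \<pi> \<psi> x \<partial>d0) = c * (Vpol d0 R \<pi> - Vpol d0 R unif_pol) + 1"
    unfolding fW_eq c_def[symmetric] Vpol_def using iA iB d.prob_space by simp
  have fWnn: "\<And>x. x \<in> space d0 \<Longrightarrow> 0 \<le> fW \<pi> \<psi> x"
  proof -
    fix x assume x: "x \<in> space d0"
    have psm1: "\<psi> \<in> borel_measurable Q1" using psm by (simp add: measurable_cong_sets[OF Qsets refl])
    have k: "0 \<le> real CARD('a) * \<pi> x a" for a using pn by simp
    note i1 = inner_gen(2)[OF Q1 psm1 psr k] and i0 = inner_gen(2)[OF Q0 psm psr k]
    show "0 \<le> fW \<pi> \<psi> x"
      unfolding fW_def
      apply (rule sum_nonneg, rule mult_nonneg_nonneg, simp, rule add_nonneg_nonneg)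
      using R_range i1 i0 by (auto intro: mult_nonneg_nonneg)
  qed
  have "(\<integral>z. W \<pi> \<psi> z \<partial>S) = enn2real (\<integral>\<^sup>+z. ennreal (W \<pi> \<psi> z) \<partial>S)"
    by (rule integral_eq_nn_integral[OF Wm]) (use W_bounds in auto)
  also have "(\<integral>\<^sup>+z. ennreal (W \<pi> \<psi> z) \<partial>S) = (\<integral>\<^sup>+x. F (\<lambda>z. ennreal (W \<pi> \<psi> z)) x \<partial>d0)"
    by (rule nn_S) (use W_meas[OF pm psm] in measurable)
  also have "\<dots> = (\<integral>\<^sup>+x. ennreal (fW \<pi> \<psi> x) \<partial>d0)"
    by (rule nn_integral_cong) (simp add: F_W[OF pn psm psr])
  also have "\<dots> = ennreal (\<integral>x. fW \<pi> \<psi> x \<partial>d0)"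
    by (rule nn_integral_eq_integral[OF ifW]) (use fWnn in \<open>auto intro: AE_I2\<close>)
  finally have eW0: "(\<integral>z. W \<pi> \<psi> z \<partial>S) = enn2real (ennreal (\<integral>x. fW \<pi> \<psi> x \<partial>d0))" .
  have "0 \<le> (\<integral>x. fW \<pi> \<psi> x \<partial>d0)" by (rule integral_nonneg_AE) (use fWnn in \<open>auto intro: AE_I2\<close>)
  then have eW: "(\<integral>z. W \<pi> \<psi> z \<partial>S) = c * (Vpol d0 R \<pi> - Vpol d0 R unif_pol) + 1"
    using eW0 ifWv by simp
  have "(\<integral>z. Zf \<pi> \<psi> z \<partial>S) = (\<integral>z. W \<pi> \<psi> z - 1 \<partial>S)" by (simp add: Z_eq)
  also have "\<dots> = (\<integral>z. W \<pi> \<psi> z \<partial>S) - 1" using Wi s.prob_space by simp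
  finally show ?thesis using eW by (simp add: c_def)
qed

lemma Zf_fun: "Zf \<pi> \<psi> = (\<lambda>z. W \<pi> \<psi> z - 1)"
  by (rule ext) (rule Z_eq)

lemma Zf_meas: "Zf \<pi> \<psi> \<in> borel_measurable S"
proof -
  have "W \<pi> \<psi> \<in> borel_measurable S"
    using W_meas[OF pm psm] by (simp add: measurable_cong_sets[OF S_sets refl])
  then show ?thesis unfolding Zf_fun by measurable
qed

lemma Zf_bounds: "-1 \<le> Zf \<pi> \<psi> z" "Zf \<pi> \<psi> z \<le> real CARD('a) - 1"
  using W_bounds[of z] by (simp_all add: Z_eq)

lemma expect_le:
  assumes V: "Vpol d0 R \<pi> \<le> Vpol d0 R unif_pol"
  shows "(\<integral>z. Zf \<pi> \<psi> z \<partial>S) \<le> Vpol d0 R unif_pol"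
proof -
  have psm1: "\<psi> \<in> borel_measurable Q1" using psm by (simp add: measurable_cong_sets[OF Qsets refl])
  note a1 = int_01[OF Q1 psm1 psr] and a0 = int_01[OF Q0 psm psr]
  define c where "c = (\<integral>y. \<psi> y \<partial>Q1) - (\<integral>y. \<psi> y \<partial>Q0)"
  have c: "-c \<le> 1" using a1 a0 by (simp add: c_def)
  have V0: "0 \<le> Vpol d0 R \<pi>" unfolding Vpol_def
    by (rule integral_nonneg_AE, rule AE_I2, rule sum_nonneg) (use pn R_range in auto)
  define t where "t = Vpol d0 R unif_pol - Vpol d0 R \<pi>"
  have t: "0 \<le> t" using V by (simp add: t_def)
  have "(-c) * t \<le> 1 * t" by (rule mult_right_mono[OF c t])
  then show ?thesis unfolding expect_Z c_def[symmetric] using V0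
    by (simp add: t_def algebra_simps)
qed

context
  fixes n :: nat
begin

abbreviation "M \<equiv> PiM {..<n} (\<lambda>_. S)"

lemma E_sets: "{D \<in> space M. c < Vhat n D \<pi> \<psi> - Vhat_u n D \<psi>} \<in> sets M"
proof -
  have [measurable]: "(\<lambda>D. (\<Sum>i<n. Zf \<pi> \<psi> (D i)) / real n) \<in> borel_measurable M"
  proof (intro borel_measurable_divide borel_measurable_sum borel_measurable_const)
    fix i assume "i \<in> {..<n}"
    then show "(\<lambda>D. Zf \<pi> \<psi> (D i)) \<in> borel_measurable M"
      by (intro measurable_compose[OF measurable_component_singleton[of i] Zf_meas])
  qed
  show ?thesis unfolding Vhat_diff by measurable
qed

lemma tail:
  assumes n: "0 < n" and io: "0 \<le> \<iota>" and V: "Vpol d0 R \<pi> \<le> Vpol d0 R unif_pol"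
  shows "measure M {D \<in> space M. Vpol d0 R unif_pol + real CARD('a) * sqrt (\<iota> / (2 * real n))
            < Vhat n D \<pi> \<psi> - Vhat_u n D \<psi>} \<le> exp (- \<iota>)"
proof -
  interpret Mp: prob_space M by (intro prob_space_PiM) (use S_prob in auto)
  define X where "X = (\<lambda>i (D::nat \<Rightarrow> 'x \<times> 'a \<times> 'y). Zf \<pi> \<psi> (D i))"
  have ind0: "Mp.indep_vars (\<lambda>_. S) (\<lambda>i \<omega>. \<omega> i) {..<n}"
    by (rule indep_components) (use n S_prob in auto)
  have ind: "Mp.indep_vars (\<lambda>_. borel) X {..<n}"
    unfolding X_def by (rule Mp.indep_vars_compose2[OF ind0 Zf_meas])
  define K where "K = real CARD('a)"
  define E where "E = (\<integral>z. Zf \<pi> \<psi> z \<partial>S)"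
  have EX: "Mp.expectation (X i) = E" if i: "i \<in> {..<n}" for i
  proof -
    have "E = (\<integral>z. Zf \<pi> \<psi> z \<partial>distr M S (\<lambda>\<omega>. \<omega> i))"
      unfolding E_def by (subst distr_PiM_component) (use S_prob i in auto)
    also have "\<dots> = Mp.expectation (X i)"
      unfolding X_def by (rule integral_distr) (use i Zf_meas in auto)
    finally show ?thesis by simp
  qed
  interpret H: Hoeffding_ineq M "{..<n}" X "\<lambda>_. -1" "\<lambda>_. K - 1" "\<Sum>i\<in>{..<n}. Mp.expectation (X i)"
    by unfold_locales (use ind Zf_bounds in \<open>auto simp: X_def K_def\<close>)
  have mu: "(\<Sum>i\<in>{..<n}. Mp.expectation (X i)) = real n * E" using EX by simp
  define s where "s = sqrt (\<iota> / (2 * real n))"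
  define \<epsilon> where "\<epsilon> = real n * K * s"
  have K1: "1 \<le> K" by (simp add: K_def)
  have eps0: "0 \<le> \<epsilon>" using K1 io by (simp add: \<epsilon>_def s_def)
  have pos: "(\<Sum>i\<in>{..<n}. ((K - 1) - (-1))\<^sup>2) > 0" using n K1 by simp
  have hf: "Mp.prob {x \<in> space M. (\<Sum>i\<in>{..<n}. X i x) \<ge> (\<Sum>i\<in>{..<n}. Mp.expectation (X i)) + \<epsilon>}
        \<le> exp (-2 * \<epsilon>\<^sup>2 / (\<Sum>i\<in>{..<n}. ((K - 1) - (-1))\<^sup>2))"
    by (rule H.Hoeffding_ineq_ge[OF eps0 pos])
  have s2: "s\<^sup>2 = \<iota> / (2 * real n)" unfolding s_def using io n by simp
  have "-2 * \<epsilon>\<^sup>2 / (\<Sum>i\<in>{..<n}. ((K - 1) - (-1))\<^sup>2) = -2 * (real n)\<^sup>2 * K\<^sup>2 * s\<^sup>2 / (real n * K\<^sup>2)"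
    by (simp add: \<epsilon>_def power_mult_distrib)
  also have "\<dots> = - \<iota>" unfolding s2 using n K1 by (simp add: field_simps power2_eq_square)
  finally have ex: "-2 * \<epsilon>\<^sup>2 / (\<Sum>i\<in>{..<n}. ((K - 1) - (-1))\<^sup>2) = - \<iota>" .
  have EV: "E \<le> Vpol d0 R unif_pol" unfolding E_def by (rule expect_le[OF V])
  have sub: "{D \<in> space M. Vpol d0 R unif_pol + K * s < Vhat n D \<pi> \<psi> - Vhat_u n D \<psi>}
      \<subseteq> {x \<in> space M. (\<Sum>i\<in>{..<n}. X i x) \<ge> (\<Sum>i\<in>{..<n}. Mp.expectation (X i)) + \<epsilon>}"
  proof safe
    fix D assume D: "D \<in> space M" and lt: "Vpol d0 R unif_pol + K * s < Vhat n D \<pi> \<psi> - Vhat_u n D \<psi>"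
    have "Vpol d0 R unif_pol + K * s < (\<Sum>i<n. X i D) / real n"
      using lt unfolding Vhat_diff X_def by simp
    then have "real n * (Vpol d0 R unif_pol + K * s) < (\<Sum>i<n. X i D)"
      using n by (simp add: field_simps)
    moreover have "real n * E \<le> real n * Vpol d0 R unif_pol" using EV by (simp add: mult_left_mono)
    ultimately show "(\<Sum>i\<in>{..<n}. Mp.expectation (X i)) + \<epsilon> \<le> (\<Sum>i\<in>{..<n}. X i D)"
      unfolding mu \<epsilon>_def by (simp add: algebra_simps)
  qed
  have bigsets: "{x \<in> space M. (\<Sum>i\<in>{..<n}. X i x) \<ge> (\<Sum>i\<in>{..<n}. Mp.expectation (X i)) + \<epsilon>} \<in> sets M"
  proof -
    have [measurable]: "(\<lambda>x. \<Sum>i\<in>{..<n}. X i x) \<in> borel_measurable M"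
      using H.random_variable by (intro borel_measurable_sum) auto
    show ?thesis by measurable
  qed
  have "measure M {D \<in> space M. Vpol d0 R unif_pol + K * s < Vhat n D \<pi> \<psi> - Vhat_u n D \<psi>}
      \<le> measure M {x \<in> space M. (\<Sum>i\<in>{..<n}. X i x) \<ge> (\<Sum>i\<in>{..<n}. Mp.expectation (X i)) + \<epsilon>}"
    by (rule Mp.finite_measure_mono[OF sub bigsets])
  also have "\<dots> \<le> exp (- \<iota>)" using hf ex by simp
  finally show ?thesis by (simp add: K_def s_def)
qed

end

end

end

theorem lemma1:
  fixes d0 :: "'x measure" and Q0 Q1 :: "'y measure"
    and R :: "'x \<Rightarrow> 'a::finite \<Rightarrow> real"
    and Pi :: "('x \<Rightarrow> 'a \<Rightarrow> real) set" and Psi :: "('y \<Rightarrow> real) set"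
    and n :: nat and \<delta> \<iota> :: real
  assumes d0: "prob_space d0"
    and Q0: "prob_space Q0" and Q1: "prob_space Q1" and Qsets: "sets Q1 = sets Q0"
    and R_meas: "\<And>a. (\<lambda>x. R x a) \<in> borel_measurable d0"
    and R_range: "\<And>x a. 0 \<le> R x a \<and> R x a \<le> 1"
    and Pi_fin: "finite Pi" and Psi_fin: "finite Psi"
    and Pi_meas: "\<And>\<pi> a. \<pi> \<in> Pi \<Longrightarrow> (\<lambda>x. \<pi> x a) \<in> borel_measurable d0"
    and Pi_nonneg: "\<And>\<pi> x a. \<pi> \<in> Pi \<Longrightarrow> 0 \<le> \<pi> x a"
    and Pi_sum: "\<And>\<pi> x. \<pi> \<in> Pi \<Longrightarrow> (\<Sum>a\<in>UNIV. \<pi> x a) = 1"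
    and Psi_meas: "\<And>\<psi>. \<psi> \<in> Psi \<Longrightarrow> \<psi> \<in> borel_measurable Q0"
    and Psi_range: "\<And>\<psi> y. \<psi> \<in> Psi \<Longrightarrow> 0 \<le> \<psi> y \<and> \<psi> y \<le> 1"
    and delta: "0 < \<delta>" "\<delta> \<le> 1"
    and iota: "\<iota> \<ge> ln (2 * real (card Pi) * real (card Psi) / \<delta>)"
  shows "measure (data_dist n d0 R Q0 Q1)
           {D \<in> space (data_dist n d0 R Q0 Q1).
              \<forall>\<pi>\<in>Pi. \<forall>\<psi>\<in>Psi.
                Vpol d0 R \<pi> \<le> Vpol d0 R unif_pol \<longrightarrow>
                Vhat n D \<pi> \<psi> - Vhat_u n D \<psi>
                  \<le> Vpol d0 R unif_pol + real CARD('a) * sqrt (\<iota> / (2 * real n))}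
         \<ge> 1 - \<delta>"
proof -
  interpret igl d0 Q0 Q1 R
    using d0 Q0 Q1 Qsets R_meas R_range by (rule igl.intro)
  let ?M = "data_dist n d0 R Q0 Q1"
  have Meq: "?M = PiM {..<n} (\<lambda>_. S)" unfolding data_dist_def sample_eq ..
  have Mprob: "prob_space ?M" unfolding Meq by (rule prob_space_PiM) (rule S_prob)
  interpret Mp: prob_space ?M by (rule Mprob)
  define c where "c = Vpol d0 R unif_pol + real CARD('a) * sqrt (\<iota> / (2 * real n))"
  define E where "E = (\<lambda>(\<pi>,\<psi>). if Vpol d0 R \<pi> \<le> Vpol d0 R unif_pol
      then {D \<in> space ?M. c < Vhat n D \<pi> \<psi> - Vhat_u n D \<psi>} else {})"
  define G where "G = {D \<in> space ?M. \<forall>\<pi>\<in>Pi. \<forall>\<psi>\<in>Psi.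
                Vpol d0 R \<pi> \<le> Vpol d0 R unif_pol \<longrightarrow>
                Vhat n D \<pi> \<psi> - Vhat_u n D \<psi> \<le> c}"
  have Geq: "G = space ?M - (\<Union>p\<in>Pi \<times> Psi. E p)"
    unfolding G_def E_def apply (auto simp: not_le split: if_splits)
    by (meson not_le)
  have upm: "\<And>a. (\<lambda>x. unif_pol x a) \<in> borel_measurable d0" by (simp add: unif_pol_def)
  have Vu0: "0 \<le> Vpol d0 R unif_pol" unfolding Vpol_def
    by (rule integral_nonneg_AE, rule AE_I2, rule sum_nonneg) (use R_range in \<open>auto simp: unif_pol_def\<close>)
  have Esets: "E p \<in> sets ?M" if p: "p \<in> Pi \<times> Psi" for p
  proof -
    obtain \<pi> \<psi> where pp: "p = (\<pi>,\<psi>)" "\<pi> \<in> Pi" "\<psi> \<in> Psi" using p by auto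
    have "{D \<in> space ?M. c < Vhat n D \<pi> \<psi> - Vhat_u n D \<psi>} \<in> sets ?M"
      unfolding Meq
      by (rule E_sets) (use pp Pi_meas Pi_nonneg Pi_sum Psi_meas Psi_range in auto)
    then show ?thesis using pp by (simp add: E_def)
  qed
  have Usets: "(\<Union>p\<in>Pi \<times> Psi. E p) \<in> sets ?M"
    using Esets Pi_fin Psi_fin by (intro sets.finite_UN) auto
  show ?thesis
  proof (cases "n = 0 \<or> Pi = {} \<or> Psi = {}")
    case True
    have "E p = {}" if "p \<in> Pi \<times> Psi" for p
      using True that Vu0 by (auto simp: E_def c_def Vhat_def Vhat_u_def split: if_splits)
    then have "G = space ?M" unfolding Geq by auto
    then show ?thesis using Mp.prob_space delta unfolding G_def c_def by simp
  next
    case False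
    then have n: "0 < n" and Pne: "Pi \<noteq> {}" and Sne: "Psi \<noteq> {}" by auto
    define A where "A = 2 * real (card Pi) * real (card Psi) / \<delta>"
    have cP: "1 \<le> card Pi" using Pne Pi_fin by (simp add: Suc_le_eq card_gt_0_iff)
    have cS: "1 \<le> card Psi" using Sne Psi_fin by (simp add: Suc_le_eq card_gt_0_iff)
    have cPS: "1 \<le> real (card Pi) * real (card Psi)" using cP cS
      by (metis mult_1 mult_mono of_nat_0_le_iff of_nat_1 of_nat_mono zero_le_one)
    have A1: "1 \<le> A"
    proof -
      have "\<delta> \<le> 2 * real (card Pi) * real (card Psi)" using cPS delta by simp
      then show ?thesis unfolding A_def using delta by simp
    qed
    have io: "0 \<le> \<iota>" using iota A1 unfolding A_def[symmetric] by (meson ln_ge_zero order_trans)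
    have ebound: "exp (-\<iota>) \<le> 1 / A"
    proof -
      have "exp (-\<iota>) \<le> exp (- ln A)" using iota unfolding A_def[symmetric] by simp
      also have "\<dots> = 1 / A" using A1 by (simp add: exp_minus divide_inverse)
      finally show ?thesis .
    qed
    have Em: "measure ?M (E p) \<le> 1 / A" if p: "p \<in> Pi \<times> Psi" for p
    proof -
      obtain \<pi> \<psi> where pp: "p = (\<pi>,\<psi>)" "\<pi> \<in> Pi" "\<psi> \<in> Psi" using p by auto
      show ?thesis
      proof (cases "Vpol d0 R \<pi> \<le> Vpol d0 R unif_pol")
        case True
        have "measure ?M {D \<in> space ?M. c < Vhat n D \<pi> \<psi> - Vhat_u n D \<psi>} \<le> exp (-\<iota>)"
          unfolding Meq c_def
          by (rule tail[OF _ _ _ _ _ n io True]) (use pp Pi_meas Pi_nonneg Pi_sum Psi_meas Psi_range in auto)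
        then show ?thesis using True pp ebound by (simp add: E_def)
      next
        case False
        then show ?thesis using pp A1 by (simp add: E_def)
      qed
    qed
    have "measure ?M (\<Union>p\<in>Pi \<times> Psi. E p) \<le> (\<Sum>p\<in>Pi \<times> Psi. measure ?M (E p))"
      using Esets Pi_fin Psi_fin by (intro Mp.finite_measure_subadditive_finite) auto
    also have "\<dots> \<le> (\<Sum>p\<in>Pi \<times> Psi. 1 / A)" by (rule sum_mono) (rule Em)
    also have "\<dots> = real (card Pi) * real (card Psi) / A" by (simp add: card_cartesian_product)
    also have "\<dots> = \<delta> / 2" unfolding A_def using cP cS delta by (simp add: field_simps)
    finally have U: "measure ?M (\<Union>p\<in>Pi \<times> Psi. E p) \<le> \<delta> / 2" .
    have "measure ?M G = 1 - measure ?M (\<Union>p\<in>Pi \<times> Psi. E p)"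
      unfolding Geq by (rule Mp.prob_compl[OF Usets])
    then have "measure ?M G \<ge> 1 - \<delta>" using U delta by simp
    then show ?thesis unfolding G_def c_def .
  qed
qed

end
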